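(* Let $0\le\alpha\le1/L$ and $0\le\beta\le 2/L-\alpha$. Then for all $n\ge1$, $$f(\theta_n)-f(\theta_* )\le\min\Big\{\frac{\|\theta_0-\theta_*\|^2}{\alpha n^2},\ \frac{4\|\theta_0-\theta_*\|^2}{(\alpha+\beta)n}\Big\},$$ where a term with zero denominator is interpreted as $+\infty$.
   Context: Let $H\in\mathbb{R}^{d\times d}$ be symmetric positive definite with largest eigenvalue $L$, $q\in\mathbb{R}^d$, $f(\theta)=\frac12\langle\theta,H\theta\rangle-\langle q,\theta\rangle$, $\theta_*=H^{-1}q$. For parameters $\alpha,\beta\in\mathbb{R}$, given $\theta_0\in\mathbb{R}^d$, set $\theta_1=\theta_0$ and for $n\ge1$ $$\theta_{n+1}=\frac{2n}{n+1}\theta_n-\frac{n-1}{n+1}\theta_{n-1}-\frac{1}{n+1}\Big(n(\alpha+\beta)H(\theta_n-\theta_* )-(n-1)\beta H(\theta_{n-1}-\theta_* )\Big)$$ (equivalently $-\frac{n\alpha+\beta}{n+1}f'(\omega_n)$ with $\omega_n=\frac{n(\alpha+\beta)\theta_n-(n-1)\beta\theta_{n-1}}{n\alpha+\beta}$ when $n\alpha+\beta\ne0$). *)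

theory Defs
  imports "HOL-Analysis.Analysis"
begin

definition quad_obj :: "real^'n^'n \<Rightarrow> real^'n \<Rightarrow> real^'n \<Rightarrow> real" where
  "quad_obj H q \<theta> = (1/2) * (\<theta> \<bullet> (H *v \<theta>)) - q \<bullet> \<theta>"

definition is_eigenvalue :: "real^'n^'n \<Rightarrow> real \<Rightarrow> bool" where
  "is_eigenvalue H lam \<longleftrightarrow> (\<exists>v. v \<noteq> 0 \<and> H *v v = lam *\<^sub>R v)"

definition is_largest_eigenvalue :: "real^'n^'n \<Rightarrow> real \<Rightarrow> bool" where
  "is_largest_eigenvalue H L \<longleftrightarrow>
     is_eigenvalue H L \<and> (\<forall>lam. is_eigenvalue H lam \<longrightarrow> lam \<le> L)"

definition sym_pos_def_mat :: "real^'n^'n \<Rightarrow> bool" where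
  "sym_pos_def_mat H \<longleftrightarrow> transpose H = H \<and> (\<forall>x. x \<noteq> 0 \<longrightarrow> x \<bullet> (H *v x) > 0)"

fun theta_iter :: "real^'n^'n \<Rightarrow> real^'n \<Rightarrow> real \<Rightarrow> real \<Rightarrow> real^'n \<Rightarrow> nat \<Rightarrow> real^'n" where
  "theta_iter H ts \<alpha> \<beta> \<theta>0 0 = \<theta>0"
| "theta_iter H ts \<alpha> \<beta> \<theta>0 (Suc 0) = \<theta>0"
| "theta_iter H ts \<alpha> \<beta> \<theta>0 (Suc (Suc k)) =
     (let m = real (Suc k);
          x = theta_iter H ts \<alpha> \<beta> \<theta>0 (Suc k);
          y = theta_iter H ts \<alpha> \<beta> \<theta>0 k
      in (2*m/(m+1)) *\<^sub>R x - ((m-1)/(m+1)) *\<^sub>R y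
         - (1/(m+1)) *\<^sub>R (m*(\<alpha>+\<beta>)) *\<^sub>R (H *v (x - ts))
         + (1/(m+1)) *\<^sub>R ((m-1)*\<beta>) *\<^sub>R (H *v (y - ts)))"

end

theory Submission
  imports Defs
begin


lemma sym_inner:
  fixes H :: "real^'n^'n"
  assumes "transpose H = H"
  shows "x \<bullet> (H *v y) = (H *v x) \<bullet> y"
proof -
  have "(H *v x) \<bullet> y = (transpose H *v x) \<bullet> y" using assms by simp
  also have "\<dots> = x \<bullet> (H *v y)" by (simp add: transpose_matrix_vector dot_lmul_matrix)
  finally show ?thesis by simp
qed

lemma quad_expand:
  fixes H :: "real^'n^'n"
  assumes "transpose H = H"
  shows "(v + t *\<^sub>R w) \<bullet> (H *v (v + t *\<^sub>R w)) = v \<bullet> (H *v v) + 2 * t * (w \<bullet> (H *v v)) + t^2 * (w \<bullet> (H *v w))"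
  using sym_inner[OF assms, of v w]
  by (simp add: matrix_vector_right_distrib matrix_vector_mult_scaleR inner_add_left inner_add_right algebra_simps power2_eq_square inner_commute)

lemma quad_nonpos:
  fixes c d :: real
  assumes "\<And>t. 2*t*c + t^2*d \<le> 0"
  shows "c = 0"
proof (rule ccontr)
  assume c: "c \<noteq> 0"
  define e where "e = 1 + \<bar>d\<bar>"
  have e: "e > 0" unfolding e_def by simp
  have "2*(c/e)*c + (c/e)^2*d \<le> 0" using assms .
  hence "e^2 * (2*(c/e)*c + (c/e)^2*d) \<le> 0" using e by (simp add: mult_nonneg_nonpos)
  moreover have "e^2 * (2*(c/e)*c + (c/e)^2*d) = c^2 * (2*e + d)"
    using e by (simp add: field_simps power2_eq_square)
  moreover have "2*e + d > 0" unfolding e_def by (auto simp: abs_if)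
  moreover have "c^2 > 0" using c by simp
  ultimately show False by (metis mult_pos_pos not_le)
qed

lemma rayleigh:
  fixes H :: "real^'n^'n"
  assumes sym: "transpose H = H" and L: "is_largest_eigenvalue H L"
  shows "x \<bullet> (H *v x) \<le> L * norm x ^ 2"
proof -
  let ?g = "\<lambda>x::real^'n. x \<bullet> (H *v x)"
  have cont: "continuous_on (sphere 0 1) ?g"
    by (intro continuous_intros continuous_on_compose2[OF matrix_vector_mult_linear_continuous_on[of UNIV H]]) auto
  obtain u :: "real^'n" where u: "norm u = 1" using vector_choose_size[of 1] by auto
  have ne: "sphere (0::real^'n) 1 \<noteq> {}" using u by auto
  obtain v where v: "v \<in> sphere 0 1" and vmax: "\<And>y. y \<in> sphere 0 1 \<Longrightarrow> ?g y \<le> ?g v"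
    using continuous_attains_sup[OF compact_sphere ne cont] by blast
  define M where "M = ?g v"
  have nv: "norm v = 1" using v by simp
  have vv: "v \<bullet> v = 1" using nv by (simp add: norm_eq_sqrt_inner)
  have hom: "?g y \<le> M * norm y ^ 2" for y
  proof (cases "y = 0")
    case True then show ?thesis by simp
  next
    case False
    let ?u = "(1/norm y) *\<^sub>R y"
    have "?u \<in> sphere 0 1" using False by simp
    hence "?g ?u \<le> M" unfolding M_def by (rule vmax)
    moreover have e: "?g ?u = ?g y / norm y ^ 2" by (simp add: matrix_vector_mult_scaleR power2_eq_square)
    ultimately have "?g y / norm y ^ 2 \<le> M" by (simp only: e)
    moreover have "norm y ^ 2 > 0" using False by simp
    ultimately show ?thesis by (simp add: pos_divide_le_eq)
  qed
  define w where "w = H *v v - M *\<^sub>R v"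
  have "2*t*(w \<bullet> w) + t^2*(?g w - M * (w \<bullet> w)) \<le> 0" for t
  proof -
    have "?g (v + t *\<^sub>R w) \<le> M * norm (v + t *\<^sub>R w) ^ 2" by (rule hom)
    moreover have "?g (v + t *\<^sub>R w) = M + 2 * t * (w \<bullet> (H *v v)) + t^2 * ?g w"
      using quad_expand[OF sym] M_def by simp
    moreover have "norm (v + t *\<^sub>R w) ^ 2 = 1 + 2*t*(v \<bullet> w) + t^2 * (w \<bullet> w)"
      unfolding power2_norm_eq_inner using vv by (simp add: inner_add_left inner_add_right inner_commute algebra_simps power2_eq_square)
    moreover have "w \<bullet> (H *v v) = w \<bullet> w + M * (v \<bullet> w)"
      unfolding w_def by (simp add: inner_diff_left inner_diff_right inner_commute algebra_simps)
    ultimately show ?thesis by (simp add: algebra_simps)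
  qed
  hence "w \<bullet> w = 0" by (rule quad_nonpos)
  hence "H *v v = M *\<^sub>R v" unfolding w_def by simp
  moreover have "v \<noteq> 0" using nv by auto
  ultimately have "is_eigenvalue H M" unfolding is_eigenvalue_def by blast
  hence "M \<le> L" using L unfolding is_largest_eigenvalue_def by blast
  hence "M * norm x ^ 2 \<le> L * norm x ^ 2" by (simp add: mult_right_mono)
  with hom[of x] show ?thesis by simp
qed



lemma psd:
  fixes H :: "real^'n^'n"
  assumes "sym_pos_def_mat H"
  shows "0 \<le> x \<bullet> (H *v x)"
  using assms unfolding sym_pos_def_mat_def
  by (cases "x = 0") (auto intro: less_imp_le)

lemma L_pos:
  fixes H :: "real^'n^'n"
  assumes "sym_pos_def_mat H" "is_largest_eigenvalue H L"
  shows "L > 0"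
proof -
  obtain v where v: "v \<noteq> 0" "H *v v = L *\<^sub>R v"
    using assms(2) unfolding is_largest_eigenvalue_def is_eigenvalue_def by blast
  have "0 < v \<bullet> (H *v v)" using assms(1) v(1) unfolding sym_pos_def_mat_def by blast
  also have "\<dots> = L * (v \<bullet> v)" using v(2) by simp
  finally have "0 < L * (v \<bullet> v)" .
  moreover have "v \<bullet> v > 0" using v(1) by simp
  ultimately show ?thesis by (auto simp: zero_less_mult_iff)
qed

lemma Hsq_bound:
  fixes H :: "real^'n^'n"
  assumes P: "sym_pos_def_mat H" and L: "is_largest_eigenvalue H L"
  shows "norm (H *v x) ^ 2 \<le> L * (x \<bullet> (H *v x))"
proof -
  have sym: "transpose H = H" using P unfolding sym_pos_def_mat_def by blast
  have Lp: "L > 0" by (rule L_pos[OF P L])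
  let ?h = "H *v x"
  let ?t = "- 1 / L"
  have "0 \<le> (x + ?t *\<^sub>R ?h) \<bullet> (H *v (x + ?t *\<^sub>R ?h))" by (rule psd[OF P])
  also have "\<dots> = x \<bullet> ?h + 2 * ?t * (?h \<bullet> ?h) + ?t^2 * (?h \<bullet> (H *v ?h))"
    by (rule quad_expand[OF sym])
  also have "\<dots> \<le> x \<bullet> ?h + 2 * ?t * (?h \<bullet> ?h) + ?t^2 * (L * norm ?h ^ 2)"
    using rayleigh[OF sym L, of ?h] by (simp add: mult_left_mono)
  also have "\<dots> = x \<bullet> ?h - norm ?h ^ 2 / L"
    unfolding dot_square_norm using Lp by (simp add: field_simps power2_eq_square)
  finally have "norm ?h ^ 2 / L \<le> x \<bullet> ?h" by simp
  thus ?thesis using Lp by (simp add: pos_divide_le_eq mult.commute)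
qed

lemma psi_rec:
  fixes H :: "real^'n^'n" and ts \<theta>0 :: "real^'n" and \<alpha> \<beta> :: real
  defines "ps \<equiv> \<lambda>k. real k *\<^sub>R (theta_iter H ts \<alpha> \<beta> \<theta>0 k - ts)"
  shows "ps (Suc (Suc k)) = 2 *\<^sub>R ps (Suc k) - ps k - (\<alpha>+\<beta>) *\<^sub>R (H *v ps (Suc k)) + \<beta> *\<^sub>R (H *v ps k)"
proof -
  define x where "x = theta_iter H ts \<alpha> \<beta> \<theta>0 (Suc k)"
  define y where "y = theta_iter H ts \<alpha> \<beta> \<theta>0 k"
  define m where "m = real (Suc k)"
  define hx where "hx = H *v (x - ts)"
  define hy where "hy = H *v (y - ts)"
  have m1: "m + 1 \<noteq> 0" unfolding m_def by simp
  have t2: "theta_iter H ts \<alpha> \<beta> \<theta>0 (Suc (Suc k)) = (2*m/(m+1)) *\<^sub>R x - ((m-1)/(m+1)) *\<^sub>R y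
         - (1/(m+1)) *\<^sub>R (m*(\<alpha>+\<beta>)) *\<^sub>R hx + (1/(m+1)) *\<^sub>R ((m-1)*\<beta>) *\<^sub>R hy"
    unfolding x_def y_def m_def hx_def hy_def by (simp add: Let_def)
  have p2: "ps (Suc (Suc k)) = (m+1) *\<^sub>R (theta_iter H ts \<alpha> \<beta> \<theta>0 (Suc (Suc k)) - ts)"
    unfolding ps_def m_def by simp
  have p1: "ps (Suc k) = m *\<^sub>R (x - ts)" unfolding ps_def m_def x_def by simp
  have p0: "ps k = (m - 1) *\<^sub>R (y - ts)" unfolding ps_def m_def y_def by simp
  have h1: "H *v ps (Suc k) = m *\<^sub>R hx" unfolding p1 hx_def by (simp add: matrix_vector_mult_scaleR)
  have h0: "H *v ps k = (m - 1) *\<^sub>R hy" unfolding p0 hy_def by (simp add: matrix_vector_mult_scaleR)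
  have c1: "\<And>c. (m+1) * (c/(m+1)) = c" using m1 by simp
  have c2: "\<And>c. (m+1) * (1/(m+1) * c) = c" using m1 by simp
  show ?thesis unfolding h1 h0 unfolding p2 t2 p1 p0
    apply (simp only: scaleR_diff_right scaleR_add_right scaleR_scaleR c1 c2)
    apply (simp add: algebra_simps vec_eq_iff)
    done
qed



definition EE :: "real^'n^'n \<Rightarrow> real \<Rightarrow> real \<Rightarrow> real^'n \<Rightarrow> real^'n \<Rightarrow> real" where
 "EE H \<alpha> \<beta> p v = \<alpha> * (p \<bullet> (H *v p)) + (\<alpha>+\<beta>)*\<beta>/2 * norm (H *v p)^2
     + (\<alpha>+\<beta>) * (p \<bullet> (H *v v)) + norm v ^ 2"

lemma EE_step:
  fixes H :: "real^'n^'n"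
  assumes sym: "transpose H = H"
  shows "EE H \<alpha> \<beta> (p + v) (v - \<alpha> *\<^sub>R (H *v p) - (\<alpha>+\<beta>) *\<^sub>R (H *v v))
     + \<alpha>*\<beta>*norm (H *v p)^2 + \<beta>*(v \<bullet> (H *v v)) - \<beta>*(\<alpha>+\<beta>)/2 * norm (H *v v)^2
     = EE H \<alpha> \<beta> p v"
proof -
  define h where "h = H *v p"
  define g where "g = H *v v"
  have f1: "p \<bullet> (H *v h) = h \<bullet> h" using sym_inner[OF sym, of p h] h_def by simp
  have f2: "v \<bullet> (H *v h) = g \<bullet> h" using sym_inner[OF sym, of v h] g_def by simp
  have f3: "p \<bullet> (H *v g) = h \<bullet> g" using sym_inner[OF sym, of p g] h_def by simp
  have f4: "v \<bullet> (H *v g) = g \<bullet> g" using sym_inner[OF sym, of v g] g_def by simp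
  have f5: "p \<bullet> g = h \<bullet> v" using sym_inner[OF sym, of p v] h_def g_def by simp
  have f6: "v \<bullet> h = h \<bullet> v" by (simp add: inner_commute)
  have f7: "g \<bullet> p = h \<bullet> v" using f5 by (simp add: inner_commute)
  show ?thesis
    unfolding EE_def power2_norm_eq_inner h_def[symmetric] g_def[symmetric]
    by (simp add: matrix_vector_right_distrib matrix_vector_mult_diff_distrib matrix_vector_mult_scaleR
        inner_add_left inner_add_right inner_diff_left inner_diff_right
        h_def[symmetric] g_def[symmetric] f1 f2 f3 f4 f5 f6 f7 inner_commute algebra_simps)
qed

lemma EE_lower:
  fixes H :: "real^'n^'n"
  assumes sym: "transpose H = H"
  shows "EE H \<alpha> \<beta> p v = norm (v + ((\<alpha>+\<beta>)/2) *\<^sub>R (H *v p))^2 + \<alpha> * (p \<bullet> (H *v p))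
     + (\<beta>^2 - \<alpha>^2)/4 * norm (H *v p)^2"
proof -
  define h where "h = H *v p"
  have f5: "p \<bullet> (H *v v) = h \<bullet> v" using sym_inner[OF sym, of p v] h_def by simp
  show ?thesis
    unfolding EE_def power2_norm_eq_inner h_def[symmetric] f5
    by (simp add: inner_add_left inner_add_right inner_commute algebra_simps power2_eq_square)
       (simp add: field_simps)
qed



lemma quad_diff:
  fixes H :: "real^'n^'n"
  assumes sym: "transpose H = H" and q: "H *v ts = q"
  shows "quad_obj H q \<theta> - quad_obj H q ts = 1/2 * ((\<theta> - ts) \<bullet> (H *v (\<theta> - ts)))"
proof -
  have f: "\<theta> \<bullet> (H *v ts) = ts \<bullet> (H *v \<theta>)"
    using sym_inner[OF sym, of \<theta> ts] by (simp add: inner_commute)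
  show ?thesis unfolding quad_obj_def q[symmetric]
    by (simp add: matrix_vector_mult_diff_distrib inner_diff_left inner_diff_right f inner_commute algebra_simps)
qed

lemma inv_sol:
  fixes H :: "real^'n^'n"
  assumes P: "sym_pos_def_mat H"
  shows "H *v (matrix_inv H *v q) = q"
proof -
  have "inj ((*v) H)" unfolding vec.inj_iff_eq_0
  proof (intro allI impI)
    fix x assume "H *v x = 0"
    hence "x \<bullet> (H *v x) = 0" by simp
    thus "x = 0" using P unfolding sym_pos_def_mat_def by force
  qed
  hence "invertible H" using invertible_left_inverse matrix_left_invertible_injective by blast
  hence "\<exists>A'. H ** A' = mat 1 \<and> A' ** H = mat 1" unfolding invertible_def .
  hence "H ** matrix_inv H = mat 1" unfolding matrix_inv_def by (rule someI_ex[THEN conjunct1])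
  thus ?thesis by (simp add: matrix_vector_mul_assoc)
qed



theorem corollary1:
  fixes H :: "real^'n^'n" and q \<theta>0 :: "real^'n" and L \<alpha> \<beta> :: real and n :: nat
  assumes "sym_pos_def_mat H"
    and "is_largest_eigenvalue H L"
    and "0 \<le> \<alpha>" and "\<alpha> \<le> 1/L"
    and "0 \<le> \<beta>" and "\<beta> \<le> 2/L - \<alpha>"
    and "n \<ge> 1"
  defines "\<theta>s \<equiv> matrix_inv H *v q"
  shows "(\<alpha> \<noteq> 0 \<longrightarrow>
            quad_obj H q (theta_iter H \<theta>s \<alpha> \<beta> \<theta>0 n) - quad_obj H q \<theta>s
              \<le> norm (\<theta>0 - \<theta>s)^2 / (\<alpha> * real n ^ 2))
       \<and> (\<alpha> + \<beta> \<noteq> 0 \<longrightarrow>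
            quad_obj H q (theta_iter H \<theta>s \<alpha> \<beta> \<theta>0 n) - quad_obj H q \<theta>s
              \<le> 4 * norm (\<theta>0 - \<theta>s)^2 / ((\<alpha> + \<beta>) * real n))"
proof -
  have sym: "transpose H = H" using assms(1) unfolding sym_pos_def_mat_def by blast
  have Lp: "L > 0" by (rule L_pos[OF assms(1,2)])
  note psdH = psd[OF assms(1)]
  note HsqB = Hsq_bound[OF assms(1,2)]
  define s where "s = \<alpha> + \<beta>"
  have s0: "0 \<le> s" using assms(3,5) s_def by simp
  have sL: "s * L \<le> 2"
  proof -
    have "s \<le> 2 / L" using assms(6) s_def by simp
    thus ?thesis using Lp by (simp add: pos_le_divide_eq)
  qed
  have aL: "\<alpha> * L \<le> 1" using assms(4) Lp by (simp add: pos_le_divide_eq)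
  define th where "th = theta_iter H \<theta>s \<alpha> \<beta> \<theta>0"
  define ps where "ps = (\<lambda>k. real k *\<^sub>R (th k - \<theta>s))"
  define vv where "vv = (\<lambda>k. ps (Suc k) - ps k)"
  define K where "K = norm (\<theta>0 - \<theta>s)^2"
  define En where "En = (\<lambda>k. EE H \<alpha> \<beta> (ps k) (vv k))"
  have rec: "ps (Suc (Suc k)) = 2 *\<^sub>R ps (Suc k) - ps k - (\<alpha>+\<beta>) *\<^sub>R (H *v ps (Suc k)) + \<beta> *\<^sub>R (H *v ps k)" for k
    using psi_rec[where H=H and ts=\<theta>s and \<alpha>=\<alpha> and \<beta>=\<beta> and k=k] unfolding ps_def th_def by simp
  have ps_step: "ps (Suc k) = ps k + vv k" for k unfolding vv_def by simp
  have vv_step: "vv (Suc k) = vv k - \<alpha> *\<^sub>R (H *v ps k) - s *\<^sub>R (H *v vv k)" for k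
  proof -
    have "vv (Suc k) = ps (Suc (Suc k)) - ps (Suc k)" unfolding vv_def by simp
    also have "\<dots> = 2 *\<^sub>R ps (Suc k) - ps k - (\<alpha>+\<beta>) *\<^sub>R (H *v ps (Suc k)) + \<beta> *\<^sub>R (H *v ps k) - ps (Suc k)"
      by (simp only: rec)
    also have "\<dots> = 2 *\<^sub>R (ps k + vv k) - ps k - (\<alpha>+\<beta>) *\<^sub>R (H *v (ps k + vv k)) + \<beta> *\<^sub>R (H *v ps k) - (ps k + vv k)"
      by (simp only: ps_step)
    also have "\<dots> = vv k - \<alpha> *\<^sub>R (H *v ps k) - s *\<^sub>R (H *v vv k)"
      unfolding s_def by (simp add: matrix_vector_right_distrib algebra_simps scaleR_2)
    finally show ?thesis .
  qed
  have En_step: "En (Suc k) \<le> En k" for k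
  proof -
    let ?p = "ps k" and ?v = "vv k"
    have eq: "En (Suc k) + \<alpha>*\<beta>*norm (H *v ?p)^2 + \<beta>*(?v \<bullet> (H *v ?v)) - \<beta>*(\<alpha>+\<beta>)/2 * norm (H *v ?v)^2 = En k"
      unfolding En_def ps_step[of k] vv_step[of k] s_def by (rule EE_step[OF sym])
    have n1: "0 \<le> \<alpha>*\<beta>*norm (H *v ?p)^2" using assms(3,5) by simp
    have "s/2 * norm (H *v ?v)^2 \<le> s/2 * (L * (?v \<bullet> (H *v ?v)))"
      using HsqB[of ?v] s0 by (simp add: mult_left_mono)
    also have "\<dots> = (s*L)/2 * (?v \<bullet> (H *v ?v))" by simp
    also have "\<dots> \<le> 1 * (?v \<bullet> (H *v ?v))"
      using sL psdH[of ?v] by (intro mult_right_mono) auto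
    finally have "s/2 * norm (H *v ?v)^2 \<le> ?v \<bullet> (H *v ?v)" by simp
    hence "0 \<le> \<beta> * (?v \<bullet> (H *v ?v) - s/2 * norm (H *v ?v)^2)" using assms(5) by simp
    hence n2: "0 \<le> \<beta>*(?v \<bullet> (H *v ?v)) - \<beta>*(\<alpha>+\<beta>)/2 * norm (H *v ?v)^2"
      unfolding s_def by (simp add: algebra_simps)
    show ?thesis using eq n1 n2 by linarith
  qed
  have th1: "th (Suc 0) = \<theta>0" unfolding th_def by simp
  have En0: "En 0 = K"
  proof -
    have "ps 0 = 0" unfolding ps_def by simp
    moreover have "vv 0 = \<theta>0 - \<theta>s" unfolding vv_def ps_def using th1 by simp
    ultimately show ?thesis unfolding En_def EE_def K_def by simp
  qed
  have EnK: "En k \<le> K" for k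
  proof (induction k)
    case 0 then show ?case using En0 by simp
  next
    case (Suc k) then show ?case using En_step[of k] by linarith
  qed
  define w where "w = (\<lambda>k. vv k + (s/2) *\<^sub>R (H *v ps k))"
  have low: "norm (w k)^2 \<le> K \<and> \<alpha> * (ps k \<bullet> (H *v ps k)) \<le> 4/3 * K \<and> \<beta>^2 * norm (H *v ps k)^2 \<le> 4 * K" for k
  proof -
    let ?X = "ps k \<bullet> (H *v ps k)" and ?Y = "norm (H *v ps k)^2"
    have X0: "0 \<le> ?X" by (rule psdH)
    have "\<alpha>^2 * ?Y \<le> \<alpha>^2 * (L * ?X)" using HsqB[of "ps k"] by (simp add: mult_left_mono)
    also have "\<dots> = \<alpha> * ((\<alpha> * L) * ?X)" by (simp add: power2_eq_square)
    also have "\<dots> \<le> \<alpha> * (1 * ?X)"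
      using aL X0 assms(3) by (intro mult_left_mono mult_right_mono) auto
    finally have aY: "\<alpha>^2 * ?Y \<le> \<alpha> * ?X" by simp
    have "En k = norm (w k)^2 + \<alpha> * ?X + (\<beta>^2 - \<alpha>^2)/4 * ?Y"
      unfolding En_def w_def s_def by (rule EE_lower[OF sym])
    hence "K \<ge> norm (w k)^2 + \<alpha> * ?X + (\<beta>^2 - \<alpha>^2)/4 * ?Y" using EnK[of k] by simp
    moreover have "0 \<le> \<alpha> * ?X" using X0 assms(3) by simp
    moreover have "0 \<le> \<beta>^2 * ?Y" by simp
    moreover have "0 \<le> norm (w k)^2" by simp
    moreover have "(\<beta>^2 - \<alpha>^2)/4 * ?Y = (\<beta>^2 * ?Y)/4 - (\<alpha>^2 * ?Y)/4" by (simp only: left_diff_distrib diff_divide_distrib times_divide_eq_left)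
    ultimately show ?thesis using aY by linarith
  qed
  have psnorm: "norm (ps k) \<le> real k * norm (\<theta>0 - \<theta>s)" for k
  proof (induction k)
    case 0 then show ?case unfolding ps_def by simp
  next
    case (Suc k)
    let ?p = "ps k"
    let ?h = "H *v ps k"
    have dec: "ps (Suc k) = (?p - (s/2) *\<^sub>R ?h) + w k" unfolding w_def ps_step by simp
    have "norm (?p - (s/2) *\<^sub>R ?h)^2 = norm ?p ^2 - s * (?p \<bullet> ?h) + s^2/4 * norm ?h^2"
      unfolding power2_norm_eq_inner
      by (simp add: inner_diff_left inner_diff_right inner_commute algebra_simps power2_eq_square)
    also have "\<dots> \<le> norm ?p ^ 2"
    proof -
      have "s^2/4 * norm ?h^2 \<le> s^2/4 * (L * (?p \<bullet> ?h))" using HsqB[of ?p] by (simp add: mult_left_mono)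
      also have "\<dots> = (s/4) * ((s*L) * (?p \<bullet> ?h))" by (simp add: power2_eq_square)
      also have "\<dots> \<le> (s/4) * (2 * (?p \<bullet> ?h))"
        using sL psdH[of ?p] s0 by (intro mult_left_mono mult_right_mono) auto
      also have "\<dots> \<le> s * (?p \<bullet> ?h)" using s0 psdH[of ?p] by simp
      finally show ?thesis by simp
    qed
    finally have "norm (?p - (s/2) *\<^sub>R ?h) \<le> norm ?p" by (rule power2_le_imp_le) simp
    moreover have "norm (w k) \<le> norm (\<theta>0 - \<theta>s)"
    proof -
      have "norm (w k)^2 \<le> norm (\<theta>0 - \<theta>s)^2" using low[of k] unfolding K_def by blast
      thus ?thesis by (rule power2_le_imp_le) simp
    qed
    ultimately have "norm (ps (Suc k)) \<le> norm ?p + norm (\<theta>0 - \<theta>s)"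
      unfolding dec by (meson add_mono norm_triangle_le)
    moreover have "real (Suc k) * norm (\<theta>0 - \<theta>s) = real k * norm (\<theta>0 - \<theta>s) + norm (\<theta>0 - \<theta>s)"
      by (simp add: algebra_simps)
    ultimately show ?case using Suc.IH by linarith
  qed
  let ?eta = "th n - \<theta>s"
  have q: "H *v \<theta>s = q" unfolding \<theta>s_def by (rule inv_sol[OF assms(1)])
  have fd: "quad_obj H q (th n) - quad_obj H q \<theta>s = 1/2 * (?eta \<bullet> (H *v ?eta))"
    by (rule quad_diff[OF sym q])
  have Xps: "ps n \<bullet> (H *v ps n) = real n ^ 2 * (?eta \<bullet> (H *v ?eta))"
    unfolding ps_def by (simp add: matrix_vector_mult_scaleR power2_eq_square)
  have npos: "real n > 0" using assms(7) by simp
  have X0: "0 \<le> ?eta \<bullet> (H *v ?eta)" by (rule psdH)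
  have K0: "0 \<le> K" unfolding K_def by simp
  have b1: "\<alpha> \<noteq> 0 \<longrightarrow> 1/2 * (?eta \<bullet> (H *v ?eta)) \<le> K / (\<alpha> * real n ^ 2)"
  proof
    assume "\<alpha> \<noteq> 0"
    hence ap: "\<alpha> > 0" using assms(3) by simp
    have "\<alpha> * (real n ^ 2 * (?eta \<bullet> (H *v ?eta))) \<le> 4/3 * K" using low[of n] unfolding Xps by blast
    hence "\<alpha> * real n ^ 2 * (1/2 * (?eta \<bullet> (H *v ?eta))) \<le> K" using K0 by (simp add: algebra_simps)
    thus "1/2 * (?eta \<bullet> (H *v ?eta)) \<le> K / (\<alpha> * real n ^ 2)"
      using ap npos by (simp add: pos_le_divide_eq mult.commute)
  qed
  have b2: "\<alpha> + \<beta> \<noteq> 0 \<longrightarrow> 1/2 * (?eta \<bullet> (H *v ?eta)) \<le> 4 * K / ((\<alpha> + \<beta>) * real n)"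
  proof
    assume "\<alpha> + \<beta> \<noteq> 0"
    hence sp: "s > 0" using s0 s_def by simp
    let ?X = "ps n \<bullet> (H *v ps n)"
    have "norm (\<beta> *\<^sub>R (H *v ps n))^2 = \<beta>^2 * norm (H *v ps n)^2"
      by (simp add: power_mult_distrib)
    also have "\<dots> \<le> 4 * K" using low[of n] by blast
    also have "\<dots> = (2 * norm (\<theta>0 - \<theta>s))^2" unfolding K_def by (simp add: power_mult_distrib)
    finally have "norm (\<beta> *\<^sub>R (H *v ps n))^2 \<le> (2 * norm (\<theta>0 - \<theta>s))^2" .
    hence bh: "norm (\<beta> *\<^sub>R (H *v ps n)) \<le> 2 * norm (\<theta>0 - \<theta>s)"
      by (rule power2_le_imp_le) simp
    have "\<beta> * ?X = ps n \<bullet> (\<beta> *\<^sub>R (H *v ps n))" by simp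
    also have "\<dots> \<le> norm (ps n) * norm (\<beta> *\<^sub>R (H *v ps n))" by (rule norm_cauchy_schwarz)
    also have "\<dots> \<le> (real n * norm (\<theta>0 - \<theta>s)) * (2 * norm (\<theta>0 - \<theta>s))"
      using psnorm[of n] bh by (intro mult_mono) auto
    also have "\<dots> = 2 * real n * K" unfolding K_def by (simp add: power2_eq_square)
    finally have bX: "\<beta> * ?X \<le> 2 * real n * K" .
    have aX: "\<alpha> * ?X \<le> 4/3 * K" using low[of n] by blast
    have "s * ?X \<le> 4/3 * K + 2 * real n * K" unfolding s_def using aX bX by (simp add: algebra_simps)
    also have "\<dots> \<le> 8 * real n * K"
    proof -
      have "1 * K \<le> real n * K" using K0 assms(7) by (intro mult_right_mono) auto
      moreover have "2 * real n * K = 2 * (real n * K)" "8 * real n * K = 8 * (real n * K)" by simp_all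
      ultimately show ?thesis using K0 by linarith
    qed
    finally have "s * (real n ^ 2 * (?eta \<bullet> (H *v ?eta))) \<le> 8 * real n * K" using Xps by simp
    hence "real n * (s * real n * (1/2 * (?eta \<bullet> (H *v ?eta)))) \<le> real n * (4 * K)"
      by (simp add: algebra_simps power2_eq_square)
    hence "s * real n * (1/2 * (?eta \<bullet> (H *v ?eta))) \<le> 4 * K" using npos by simp
    thus "1/2 * (?eta \<bullet> (H *v ?eta)) \<le> 4 * K / ((\<alpha> + \<beta>) * real n)"
      using sp npos unfolding s_def[symmetric] by (simp add: pos_le_divide_eq mult.commute)
  qed
  have "(\<alpha> \<noteq> 0 \<longrightarrow> quad_obj H q (th n) - quad_obj H q \<theta>s \<le> K / (\<alpha> * real n ^ 2))
      \<and> (\<alpha> + \<beta> \<noteq> 0 \<longrightarrow> quad_obj H q (th n) - quad_obj H q \<theta>s \<le> 4 * K / ((\<alpha> + \<beta>) * real n))"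
    unfolding fd using b1 b2 by blast
  thus ?thesis unfolding th_def K_def .
qed

end
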